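(* Let $Y$ be a locally compact second countable metric space with a continuous action of $G=\mathrm{SL}_d(\mathbb R)$, let $Y'\subset Y$ be a closed $G$-invariant subset, $0<q<p\le1$ and $y\in Y\setminus Y'$. If $x\in\mathrm{Div}(y,Y',p)$, then for every compact $K\subset Y\setminus Y'$ and every $t>1$ there exists $N$ such that for every integer $M>N$, $$\frac1M\#\{l\in[1,M]\cap\mathbb N:\ g_t^lu(x)y\notin K\}\ge q.$$
   Context: $d=m+n$; $a_1,\dots,a_m>0$, $b_1,\dots,b_n>0$ with $\sum a_i=\sum b_j=1$; $g_t=\mathrm{diag}(t^{a_1},\dots,t^{a_m},t^{-b_1},\dots,t^{-b_n})$ for $t>0$ and $u(x)=\begin{pmatrix}I_m&x\\0&I_n\end{pmatrix}$ for $x\in M_{m\times n}(\mathbb R)$. For $Y,Y'$ as in the claim, $y\in Y\setminus Y'$ and $0<p\le1$, $\mathrm{Div}(y,Y',p)$ is the set of $x\in M_{m\times n}(\mathbb R)$ such that for every compact $K\subset Y\setminus Y'$, $\liminf_{T\to\infty}\frac1T\int_0^T\mathbf 1[g_{e^t}u(x)y\in Y\setminus K]\,dt\ge p$. *)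

theory Defs
  imports "HOL-Analysis.Analysis"
begin

text \<open>Index type of R^d, d = m + n, is the sum type 'm + 'n (Inl = first m coordinates).\<close>

definition SLd :: "(real^'d::finite^'d) set" where
  "SLd = {g. det g = 1}"

definition gflow :: "('m::finite \<Rightarrow> real) \<Rightarrow> ('n::finite \<Rightarrow> real) \<Rightarrow> real \<Rightarrow> real^('m + 'n)^('m + 'n)" where
  "gflow a b t = (\<chi> i j. if i = j then (case i of Inl k \<Rightarrow> t powr a k | Inr k \<Rightarrow> t powr (- b k)) else 0)"

definition umat :: "real^'n::finite^'m::finite \<Rightarrow> real^('m + 'n)^('m + 'n)" where
  "umat x = (\<chi> i j. if i = j then 1 else
      (case (i, j) of (Inl k, Inr l) \<Rightarrow> x $ k $ l | _ \<Rightarrow> 0))"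

fun matpow :: "real^'d::finite^'d \<Rightarrow> nat \<Rightarrow> real^'d^'d" where
  "matpow A 0 = mat 1"
| "matpow A (Suc l) = A ** matpow A l"

definition continuous_SL_action :: "(real^'d::finite^'d \<Rightarrow> 'y::topological_space \<Rightarrow> 'y) \<Rightarrow> bool" where
  "continuous_SL_action act \<longleftrightarrow>
     (\<forall>y. act (mat 1) y = y) \<and>
     (\<forall>g\<in>SLd. \<forall>h\<in>SLd. \<forall>y. act (g ** h) y = act g (act h y)) \<and>
     continuous_on (SLd \<times> UNIV) (\<lambda>(g, y). act g y)"

definition Div ::
  "(real^('m::finite+'n::finite)^('m+'n) \<Rightarrow> 'y::topological_space \<Rightarrow> 'y) \<Rightarrow> ('m \<Rightarrow> real) \<Rightarrow> ('n \<Rightarrow> real)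
    \<Rightarrow> 'y \<Rightarrow> 'y set \<Rightarrow> real \<Rightarrow> (real^'n^'m) set" where
  "Div act a b y Y' p = {x. \<forall>K. compact K \<and> K \<subseteq> UNIV - Y' \<longrightarrow>
      Liminf at_top (\<lambda>T::real. ereal ((1 / T) *
         (LBINT t=0..T. indicator (UNIV - K) (act (gflow a b (exp t) ** umat x) y) :: real)))
      \<ge> ereal p}"

end

theory Submission
  imports Defs
begin

lemma gflow_mult:
  fixes a :: "'m::finite \<Rightarrow> real" and b :: "'n::finite \<Rightarrow> real"
  assumes "u > 0" "v > 0"
  shows "gflow a b u ** gflow a b v = gflow a b (u * v)"
proof -
  have "(gflow a b u ** gflow a b v) $ i $ j = gflow a b (u * v) $ i $ j" for i j
  proof -
    have "(gflow a b u ** gflow a b v) $ i $ j = (\<Sum>k\<in>UNIV. gflow a b u $ i $ k * gflow a b v $ k $ j)"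
      by (simp add: matrix_matrix_mult_def)
    also have "\<dots> = gflow a b u $ i $ i * gflow a b v $ i $ j"
      by (subst sum.remove[of _ i]) (auto simp: gflow_def)
    also have "\<dots> = gflow a b (u * v) $ i $ j"
      using assms by (auto simp: gflow_def powr_mult split: sum.splits)
    finally show ?thesis .
  qed
  then show ?thesis by (simp add: vec_eq_iff)
qed

lemma gflow_one: "gflow a b 1 = mat 1"
  by (simp add: gflow_def mat_def vec_eq_iff split: sum.splits)

lemma matpow_gflow:
  assumes "t > 0"
  shows "matpow (gflow a b t) l = gflow a b (t ^ l)"
  using assms by (induction l) (auto simp: gflow_one gflow_mult)

lemma gflow_SL:
  fixes a :: "'m::finite \<Rightarrow> real" and b :: "'n::finite \<Rightarrow> real"
  assumes "u > 0" "sum a UNIV = 1" "sum b UNIV = 1"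
  shows "gflow a b u \<in> SLd"
proof -
  have "det (gflow a b u) = (\<Prod>i\<in>UNIV. gflow a b u $ i $ i)"
    by (rule det_diagonal) (simp add: gflow_def)
  also have "\<dots> = (\<Prod>i\<in>(UNIV::'m set) <+> (UNIV::'n set). gflow a b u $ i $ i)"
    by simp
  also have "\<dots> = (\<Prod>k\<in>UNIV. u powr a k) * (\<Prod>k\<in>UNIV. u powr (- b k))"
    by (subst prod.Plus) (auto simp: gflow_def o_def)
  also have "\<dots> = u powr (sum a UNIV) * u powr (sum (\<lambda>k. - b k) UNIV)"
    using powr_sum[of u a UNIV] powr_sum[of u "\<lambda>k. - b k" UNIV] assms by simp
  also have "\<dots> = 1" using assms by (simp add: sum_negf powr_minus)
  finally show ?thesis by (simp add: SLd_def)
qed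

lemma umat_SL:
  fixes x :: "real^'n::finite^'m::finite"
  shows "umat x \<in> SLd"
proof -
  let ?A = "umat x"
  let ?U = "UNIV :: ('m + 'n) set"
  let ?PU = "{p. p permutes ?U}"
  let ?pp = "\<lambda>p. of_int (sign p) * prod (\<lambda>i. ?A$i$p i) ?U"
  have id0: "{id} \<subseteq> ?PU" by (auto simp: permutes_id)
  have p0: "\<forall>p \<in> ?PU - {id}. ?pp p = 0"
  proof
    fix p assume p: "p \<in> ?PU - {id}"
    have "\<exists>i. ?A$i$p i = 0"
    proof (rule ccontr)
      assume "\<not> ?thesis"
      then have nz: "\<And>i. ?A$i$p i \<noteq> 0" by blast
      have r: "p (Inr j) = Inr j" for j
        using nz[of "Inr j"] by (auto simp: umat_def split: if_splits sum.splits prod.splits)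
      obtain i where i: "p i \<noteq> i" using p by fastforce
      have "\<exists>k l. i = Inl k \<and> p i = Inr l"
        using nz[of i] i by (auto simp: umat_def split: if_splits sum.splits prod.splits)
      then obtain k l where "i = Inl k" "p i = Inr l" by blast
      then have "p (Inl k) = p (Inr l)" using r by simp
      then have "Inl k = (Inr l :: 'm + 'n)"
        using p permutes_inj[of p ?U] by (auto dest: injD)
      then show False by simp
    qed
    with prod_zero[of ?U] show "?pp p = 0" by force
  qed
  have "det ?A = (\<Sum>p\<in>?PU. ?pp p)" by (simp add: det_def)
  also have "\<dots> = ?pp id"
    using sum.mono_neutral_cong_left[OF finite_permutations[of ?U] id0 p0] by simp
  also have "\<dots> = 1" by (simp add: sign_id umat_def)
  finally show ?thesis by (simp add: SLd_def)
qed


lemma gflow_cont: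
  fixes a :: "'m::finite \<Rightarrow> real" and b :: "'n::finite \<Rightarrow> real"
  shows "continuous_on S (\<lambda>r. gflow a b (exp r))"
  unfolding gflow_def
  apply (intro continuous_on_vec_lambda)
  subgoal for i j
    by (cases i; cases "i = j") (auto simp: powr_def intro!: continuous_intros)
  done

theorem lemma6p3:
  fixes act :: "real^('m::finite + 'n::finite)^('m + 'n) \<Rightarrow> 'y::{metric_space, second_countable_topology} \<Rightarrow> 'y"
    and a :: "'m \<Rightarrow> real" and b :: "'n \<Rightarrow> real"
    and Y' :: "'y set" and y :: 'y and p q :: real and x :: "real^'n^'m"
  assumes "\<forall>i. a i > 0" and "(\<Sum>i\<in>UNIV. a i) = 1"
    and "\<forall>j. b j > 0" and "(\<Sum>j\<in>UNIV. b j) = 1"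
    and "locally compact (UNIV :: 'y set)"
    and "continuous_SL_action act"
    and "closed Y'" and "\<forall>g\<in>SLd. \<forall>z\<in>Y'. act g z \<in> Y'"
    and "0 < q" and "q < p" and "p \<le> 1"
    and "y \<notin> Y'"
    and "x \<in> Div act a b y Y' p"
  shows "\<forall>K t. compact K \<and> K \<subseteq> UNIV - Y' \<and> t > 1 \<longrightarrow>
     (\<exists>N::nat. \<forall>M::nat. M > N \<longrightarrow>
        real (card {l\<in>{1..M}. act (matpow (gflow a b t) l ** umat x) y \<notin> K}) / real M \<ge> q)"
proof (intro allI impI, elim conjE)
  fix K and t :: real
  assume K: "compact K" "K \<subseteq> UNIV - Y'" and t: "t > 1"
  note sa = assms(2) and sb = assms(4)
  have act_id: "\<And>z. act (mat 1) z = z"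
   and act_comp: "\<And>g h z. g \<in> SLd \<Longrightarrow> h \<in> SLd \<Longrightarrow> act (g ** h) z = act g (act h z)"
   and act_cont: "continuous_on (SLd \<times> UNIV) (\<lambda>(g, y). act g y)"
    using assms(6) unfolding continuous_SL_action_def by auto
  define G where "G = gflow a b"
  have GSL: "\<And>u. u > 0 \<Longrightarrow> G u \<in> SLd" unfolding G_def using gflow_SL sa sb by blast
  have SLmul: "\<And>g h. g \<in> SLd \<Longrightarrow> h \<in> SLd \<Longrightarrow> g ** h \<in> SLd"
    by (simp add: SLd_def det_mul)
  define \<tau> where "\<tau> = ln t"
  have tau: "\<tau> > 0" using t by (simp add: \<tau>_def)
  define K' where "K' = (\<lambda>(r, k). act (G (exp r)) k) ` ({0..\<tau>} \<times> K)"
  have cK': "compact K'"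
  proof -
    have "continuous_on ({0..\<tau>} \<times> K) (\<lambda>rk. (\<lambda>(g, y). act g y) ((\<lambda>(r, k). (G (exp r), k)) rk))"
    proof (rule continuous_on_compose2[OF act_cont])
      show "continuous_on ({0..\<tau>} \<times> K) (\<lambda>(r, k). (G (exp r), k))"
        unfolding G_def
        by (auto simp: case_prod_unfold intro!: continuous_intros
            continuous_on_compose2[OF gflow_cont[of UNIV a b]])
      show "(\<lambda>(r, k). (G (exp r), k)) ` ({0..\<tau>} \<times> K) \<subseteq> SLd \<times> UNIV"
        using GSL by auto
    qed
    moreover have "compact ({0..\<tau>} \<times> K)" using K(1) by (intro compact_Times) auto
    ultimately have "compact ((\<lambda>rk. (\<lambda>(g, y). act g y) ((\<lambda>(r, k). (G (exp r), k)) rk)) ` ({0..\<tau>} \<times> K))"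
      by (rule compact_continuous_image)
    moreover have "(\<lambda>rk. (\<lambda>(g, y). act g y) ((\<lambda>(r, k). (G (exp r), k)) rk)) = (\<lambda>(r, k). act (G (exp r)) k)"
      by (auto simp: fun_eq_iff)
    ultimately show ?thesis by (metis K'_def)
  qed
  have K'Y: "K' \<subseteq> UNIV - Y'"
  proof
    fix w assume "w \<in> K'"
    then obtain r k where rk: "r \<in> {0..\<tau>}" "k \<in> K" "w = act (G (exp r)) k"
      by (auto simp: K'_def)
    have "w \<notin> Y'"
    proof
      assume "w \<in> Y'"
      then have "act (G (exp (-r))) w \<in> Y'" using assms(8) GSL by auto
      also have "act (G (exp (-r))) w = act (G (exp (-r)) ** G (exp r)) k"
        using rk GSL act_comp by auto
      also have "G (exp (-r)) ** G (exp r) = mat 1"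
        unfolding G_def by (simp add: gflow_mult gflow_one flip: exp_add)
      finally show False using act_id rk K(2) by auto
    qed
    then show "w \<in> UNIV - Y'" by simp
  qed
  define z where "z l = act (matpow (gflow a b t) l ** umat x) y" for l
  have key: "act (G (exp s) ** umat x) y \<in> K'"
    if "real l * \<tau> \<le> s" "s \<le> (real l + 1) * \<tau>" "z l \<in> K" for l s
  proof -
    define r where "r = s - real l * \<tau>"
    have r: "r \<in> {0..\<tau>}" using that by (auto simp: r_def algebra_simps)
    have "exp s = exp r * t ^ l"
      using t by (simp add: r_def \<tau>_def exp_diff exp_of_nat_mult)
    then have "G (exp s) = G (exp r) ** matpow (gflow a b t) l"
      using t by (simp add: G_def gflow_mult matpow_gflow)
    then have e: "G (exp s) ** umat x = G (exp r) ** (matpow (gflow a b t) l ** umat x)"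
      by (simp add: matrix_mul_assoc)
    have m: "matpow (gflow a b t) l ** umat x \<in> SLd"
      using SLmul[OF GSL[of "t ^ l"] umat_SL[of x]] t by (simp add: G_def matpow_gflow)
    have "act (G (exp s) ** umat x) y = act (G (exp r)) (z l)"
      unfolding z_def e using act_comp[OF GSL[of "exp r"] m] by simp
    then show ?thesis using r that(3) by (auto simp: K'_def)
  qed
  define f where "f s = (indicator (UNIV - K') (act (gflow a b (exp s) ** umat x) y) :: real)" for s
  define c where "c l = (if z l \<notin> K then 1 else 0 :: real)" for l
  have f01: "0 \<le> f s" "f s \<le> 1" for s by (auto simp: f_def indicator_def)
  have intbound: "(LBINT s=0..(real M + 1) * \<tau>. f s) \<le> \<tau> * (\<Sum>l\<in>{..M}. c l)" for M
  proof -
    define T where "T = (real M + 1) * \<tau>"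
    have T0: "0 \<le> T" using tau by (simp add: T_def)
    define g where "g s = (\<Sum>l\<in>{..M}. c l * indicator {real l * \<tau>..(real l + 1) * \<tau>} s)" for s
    have gint: "integrable lborel g" unfolding g_def
      by (intro Bochner_Integration.integrable_sum Bochner_Integration.integrable_mult_right integrable_real_indicator)
         (auto simp: emeasure_lborel_Icc_eq)
    have gval: "integral\<^sup>L lborel g = \<tau> * (\<Sum>l\<in>{..M}. c l)"
    proof -
      have "integral\<^sup>L lborel g = (\<Sum>l\<in>{..M}. integral\<^sup>L lborel (\<lambda>s. c l * indicator {real l * \<tau>..(real l + 1) * \<tau>} s))"
        unfolding g_def
        by (rule Bochner_Integration.integral_sum)
           (intro Bochner_Integration.integrable_mult_right integrable_real_indicator;
            auto simp: emeasure_lborel_Icc_eq)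
      also have "\<dots> = (\<Sum>l\<in>{..M}. c l * \<tau>)"
        using tau by (intro sum.cong) (simp_all add: algebra_simps)
      finally show ?thesis by (simp add: sum_distrib_left mult.commute)
    qed
    have g0: "0 \<le> g s" for s unfolding g_def by (auto intro!: sum_nonneg simp: c_def)
    have pw: "indicator {0..T} s *\<^sub>R f s \<le> g s" for s
    proof (cases "s \<in> {0..T}")
      case False then show ?thesis using g0 by simp
    next
      case True
      define l where "l = min M (nat \<lfloor>s / \<tau>\<rfloor>)"
      have lM: "l \<in> {..M}" by (simp add: l_def)
      have fl: "real_of_int \<lfloor>s / \<tau>\<rfloor> \<le> s / \<tau>" "s / \<tau> < real_of_int \<lfloor>s / \<tau>\<rfloor> + 1"
        by linarith+
      have fl2: "real_of_int \<lfloor>s / \<tau>\<rfloor> * \<tau> \<le> s" "s < (real_of_int \<lfloor>s / \<tau>\<rfloor> + 1) * \<tau>"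
        using pos_le_divide_eq[OF tau] fl(1) pos_divide_less_eq[OF tau] fl(2) by blast+
      have flnn: "0 \<le> \<lfloor>s / \<tau>\<rfloor>" using True tau by auto
      have ls: "real l * \<tau> \<le> s \<and> s \<le> (real l + 1) * \<tau>"
      proof (cases "nat \<lfloor>s / \<tau>\<rfloor> \<le> M")
        case True
        then have "real l = real_of_int \<lfloor>s / \<tau>\<rfloor>" using flnn by (simp add: l_def)
        then show ?thesis using fl2 by simp
      next
        case False
        then have "l = M" by (simp add: l_def)
        moreover have "real M \<le> s / \<tau>" using False fl flnn by linarith
        ultimately show ?thesis using \<open>s \<in> {0..T}\<close> tau by (simp add: field_simps T_def)
      qed
      have "c l * indicator {real l * \<tau>..(real l + 1) * \<tau>} s \<le> g s"
        unfolding g_def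
        by (rule member_le_sum[OF lM]) (auto simp: c_def)
      then have cg: "c l \<le> g s" using ls by simp
      show ?thesis
      proof (cases "z l \<in> K")
        case True
        then have "f s = 0" using key[of l s] ls by (simp add: f_def G_def)
        then show ?thesis using g0 by simp
      next
        case False
        then show ?thesis using cg f01[of s] \<open>s \<in> {0..T}\<close> by (simp add: c_def)
      qed
    qed
    have "(LBINT s=0..T. f s) = integral\<^sup>L lborel (\<lambda>s. indicator {0..T} s *\<^sub>R f s)"
      using interval_integral_Icc[OF T0, of f] by (simp add: set_lebesgue_integral_def zero_ereal_def)
    also have "\<dots> \<le> integral\<^sup>L lborel g"
    proof (cases "integrable lborel (\<lambda>s. indicator {0..T} s *\<^sub>R f s)")
      case True then show ?thesis using gint pw by (intro integral_mono) auto
    next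
      case False then show ?thesis using g0 by (simp add: not_integrable_integral_eq integral_nonneg)
    qed
    finally show ?thesis using gval by (simp add: T_def)
  qed
  define p' where "p' = (p + q) / 2"
  have p': "q < p'" "p' < p" using assms(10) by (auto simp: p'_def)
  have "Liminf at_top (\<lambda>T::real. ereal ((1 / T) * (LBINT s=0..T. f s))) \<ge> ereal p"
    using assms(13) cK' K'Y unfolding Div_def f_def by blast
  then have "ereal p' < Liminf at_top (\<lambda>T::real. ereal ((1 / T) * (LBINT s=0..T. f s)))"
    using p' by (meson ereal_less_eq(3) less_le_trans not_le)
  from less_LiminfD[OF this] obtain T0 where T0: "\<And>T. T \<ge> T0 \<Longrightarrow> p' < (1 / T) * (LBINT s=0..T. f s)"
    by (auto simp: eventually_at_top_linorder)
  define N where "N = nat \<lceil>max (T0 / \<tau>) (1 / (p' - q))\<rceil>"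
  show "\<exists>N::nat. \<forall>M::nat. M > N \<longrightarrow>
        real (card {l\<in>{1..M}. act (matpow (gflow a b t) l ** umat x) y \<notin> K}) / real M \<ge> q"
  proof (intro exI allI impI)
    fix M :: nat assume MN: "N < M"
    have M1: "real M \<ge> 1 / (p' - q)" "real M \<ge> T0 / \<tau>" using MN unfolding N_def by linarith+
    have Mpos: "real M > 0" using MN by simp
    define T where "T = (real M + 1) * \<tau>"
    have Tpos: "T > 0" using tau by (simp add: T_def)
    have "T \<ge> T0" using M1(2) tau by (simp add: T_def field_simps)
    then have "p' < (1 / T) * (LBINT s=0..T. f s)" by (rule T0)
    also have "\<dots> \<le> (1 / T) * (\<tau> * (\<Sum>l\<in>{..M}. c l))"
      using intbound[of M] Tpos unfolding T_def by (intro mult_left_mono) auto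
    also have "(1 / T) * (\<tau> * (\<Sum>l\<in>{..M}. c l)) = (\<Sum>l\<in>{..M}. c l) / (real M + 1)"
    proof -
      have "real M + 1 \<noteq> 0" by linarith
      then show ?thesis using tau by (simp add: T_def)
    qed
    finally have S: "p' * (real M + 1) < (\<Sum>l\<in>{..M}. c l)"
      by (simp add: pos_less_divide_eq)
    have "{..M} = insert 0 {1..M}" by auto
    then have "(\<Sum>l\<in>{..M}. c l) = c 0 + (\<Sum>l\<in>{1..M}. c l)" by simp
    also have "(\<Sum>l\<in>{1..M}. c l) = real (card {l\<in>{1..M}. z l \<notin> K})"
      by (simp add: c_def sum.If_cases, rule arg_cong[where f=card], auto)
    finally have "(\<Sum>l\<in>{..M}. c l) \<le> 1 + real (card {l\<in>{1..M}. z l \<notin> K})"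
      by (simp add: c_def)
    with S have C: "p' * (real M + 1) - 1 < real (card {l\<in>{1..M}. z l \<notin> K})" by simp
    have "real M * (p' - q) \<ge> 1" using M1(1) p' by (simp add: field_simps)
    then have "q * real M \<le> p' * (real M + 1) - 1" using p' assms(9) by (simp add: algebra_simps)
    with C have "q * real M \<le> real (card {l\<in>{1..M}. z l \<notin> K})" by simp
    then show "real (card {l\<in>{1..M}. act (matpow (gflow a b t) l ** umat x) y \<notin> K}) / real M \<ge> q"
      using Mpos by (simp add: z_def field_simps)
  qed
qed

end
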